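(* Let $\mathbb{X}$ be a normed linear space with Borel $\sigma$-algebra $\mathcal{B}_{\mathbb{X}}$, and let $(\mathbb{P},d_{\mathbb{P}})$ be a metric space of probability measures on $(\mathbb{X},\mathcal{B}_{\mathbb{X}})$ such that $d_{\mathbb{P}}$ metrizes weak convergence. Let $g,g^\nu:\mathbb{X}\to\overline{\mathbb{R}}$, $P,P^\nu\in\mathbb{P}$ and $\theta^\nu\in[0,+\infty)$, $\nu\in\mathbb{N}$, and define on $\mathbb{X}\times\mathbb{P}$ (with the product topology) $$\phi^\nu(x,Q):=\mathbb{E}^Q\big[g^\nu(x+\xi)\big]+\theta^\nu d_{\mathbb{P}}(Q,P^\nu),\qquad \phi(x,Q):=\mathbb{E}^Q\big[g(x+\xi)\big]+\iota_{\{P\}}(Q).$$ Suppose $\theta^\nu\to+\infty$, $\theta^\nu d_{\mathbb{P}}(P^\nu,P)\to0$, and for each $x\in\mathbb{X}$: (i) $g$ and all $g^\nu$ are measurable; (ii) for every sequence $Q^\nu\in\mathbb{P}$ converging to some $Q\in\mathbb{P}$, $$\liminf_{K\to+\infty}\ \liminf_{(\nu,y)\to(+\infty,x)}\mathbb{E}^{Q^\nu}\big[g^\nu(y+\xi)\,\mathbb{1}\{\xi:g^\nu(y+\xi)\le -K\}\big]=0;$$ (iii) $\liminf_{(\nu,y)\to(+\infty,x)}g^\nu(y)\ge g(x)$; (iv) for every $Q\in\mathbb{P}$, $\mathbb{E}^Q[g(x+\xi)]>-\infty$; (v) there exists a $P$-integrable function $h:\mathbb{X}\to[0,+\infty)$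 such that for $P$-a.e. $\xi\in\mathbb{X}$ one has $g^\nu(x+\xi)\le h(\xi)$ for all $\nu\in\mathbb{N}$, and $g^\nu(x)\to g(x)$ as $\nu\to+\infty$. Then $\phi^\nu$ epi-converges to $\phi$ as functions on $\mathbb{X}\times\mathbb{P}$.
   Context: $\overline{\mathbb{R}}=\mathbb{R}\cup\{-\infty,+\infty\}$. $\iota_C(z)=0$ if $z\in C$ and $+\infty$ otherwise. Expectations are taken over $\xi\in\mathbb{X}$ distributed according to the indicated probability; for measurable $\overline{\mathbb{R}}$-valued $G$, $\mathbb{E}^\mu[G]:=\int G_+\,d\mu-\int G_-\,d\mu$ with conventions $+\infty-\alpha=+\infty$ for all $\alpha\in\overline{\mathbb{R}}$ and $\beta-(+\infty)=-\infty$ for $\beta\in\mathbb{R}$. $\mathbb{1}\{B\}$ is the indicator. $\liminf_{(\nu,y)\to(+\infty,x)}a^\nu(y):=\lim_{\delta\downarrow0}\lim_{N\to\infty}\inf\{a^\nu(y):\nu\ge N,\ \|y-x\|<\delta\}$. Epi-convergence of $\phi^\nu$ to $\phi$: for every point $z$, $\phi(z)\le\liminf\phi^\nu(z^\nu)$ for all $z^\nu\to z$, and some $z^\nu\to z$ has $\phi^\nu(z^\nu)\to\phi(z)$. *)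

theory Defs
  imports "HOL-Probability.Probability"
begin

text \<open>Expectation of an extended-real valued function with the paper's conventions:
  E[G] = int G_+ - int G_-, where +inf - alpha = +inf and beta - (+inf) = -inf.\<close>
definition expect :: "'a measure \<Rightarrow> ('a \<Rightarrow> ereal) \<Rightarrow> ereal" where
  "expect Q G =
     (let a = (\<integral>\<^sup>+ \<xi>. e2ennreal (G \<xi>) \<partial>Q);
          b = (\<integral>\<^sup>+ \<xi>. e2ennreal (- G \<xi>) \<partial>Q)
      in if a = \<infinity> then \<infinity> else enn2ereal a - enn2ereal b)"

text \<open>Joint lower limit lim_{delta->0} lim_{N->oo} inf{a^nu(y): nu>=N, norm(y-x)<delta};
  both limits are of monotone nondecreasing families, hence suprema.\<close>
definition liminf_joint :: "(nat \<Rightarrow> 'a::real_normed_vector \<Rightarrow> ereal) \<Rightarrow> 'a \<Rightarrow> ereal" where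
  "liminf_joint a x =
     (SUP \<delta>\<in>{0::real<..}. SUP N. INF \<nu>\<in>{N..}. INF y\<in>{y. norm (y - x) < \<delta>}. a \<nu> y)"

definition iota :: "'b set \<Rightarrow> 'b \<Rightarrow> ereal" where
  "iota C z = (if z \<in> C then 0 else \<infinity>)"

definition weak_conv :: "(nat \<Rightarrow> 'a::real_normed_vector measure) \<Rightarrow> 'a measure \<Rightarrow> bool" where
  "weak_conv Qs Q \<longleftrightarrow>
     (\<forall>f::'a \<Rightarrow> real. continuous_on UNIV f \<and> bounded (range f) \<longrightarrow>
        (\<lambda>n. integral\<^sup>L (Qs n) f) \<longlonglongrightarrow> integral\<^sup>L Q f)"

definition prob_measures_on_borel :: "'a::topological_space measure set \<Rightarrow> bool" where
  "prob_measures_on_borel PP \<longleftrightarrow> (\<forall>Q\<in>PP. prob_space Q \<and> sets Q = sets borel)"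

definition metric_on :: "'b set \<Rightarrow> ('b \<Rightarrow> 'b \<Rightarrow> real) \<Rightarrow> bool" where
  "metric_on S d \<longleftrightarrow>
     (\<forall>x\<in>S. \<forall>y\<in>S. 0 \<le> d x y \<and> (d x y = 0 \<longleftrightarrow> x = y) \<and> d x y = d y x) \<and>
     (\<forall>x\<in>S. \<forall>y\<in>S. \<forall>z\<in>S. d x z \<le> d x y + d y z)"

definition metrizes_weak_conv :: "'a::real_normed_vector measure set \<Rightarrow> ('a measure \<Rightarrow> 'a measure \<Rightarrow> real) \<Rightarrow> bool" where
  "metrizes_weak_conv PP d \<longleftrightarrow>
     (\<forall>Qs Q. (\<forall>n. Qs n \<in> PP) \<and> Q \<in> PP \<longrightarrow>
        ((\<lambda>n. d (Qs n) Q) \<longlonglongrightarrow> 0 \<longleftrightarrow> weak_conv Qs Q))"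

definition epi_converges ::
  "'b set \<Rightarrow> ((nat \<Rightarrow> 'b) \<Rightarrow> 'b \<Rightarrow> bool) \<Rightarrow> (nat \<Rightarrow> 'b \<Rightarrow> ereal) \<Rightarrow> ('b \<Rightarrow> ereal) \<Rightarrow> bool" where
  "epi_converges S conv \<phi>s \<phi> \<longleftrightarrow>
     (\<forall>z\<in>S.
        (\<forall>zs. (\<forall>n. zs n \<in> S) \<and> conv zs z \<longrightarrow> \<phi> z \<le> liminf (\<lambda>n. \<phi>s n (zs n))) \<and>
        (\<exists>zs. (\<forall>n. zs n \<in> S) \<and> conv zs z \<and> (\<lambda>n. \<phi>s n (zs n)) \<longlonglongrightarrow> \<phi> z))"

end

theory Submission imports Defs begin

lemma infconv:
  fixes u :: "'a::metric_space \<Rightarrow> real"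
  assumes u0: "\<And>\<eta>. 0 \<le> u \<eta>" and L: "0 \<le> L"
  shows "0 \<le> (INF \<eta>. u \<eta> + L * dist \<xi> \<eta>)"
    and "(INF \<eta>. u \<eta> + L * dist \<xi> \<eta>) \<le> u \<xi>"
    and "(\<And>\<eta>. r \<le> u \<eta> + L * dist \<xi> \<eta>) \<Longrightarrow> r \<le> (INF \<eta>. u \<eta> + L * dist \<xi> \<eta>)"
    and "L-lipschitz_on UNIV (\<lambda>\<xi>. INF \<eta>. u \<eta> + L * dist \<xi> \<eta>)"
proof -
  have bdd: "bdd_below (range (\<lambda>\<eta>. u \<eta> + L * dist x \<eta>))" for x
    using u0 L by (intro bdd_belowI[of _ 0]) auto
  show "0 \<le> (INF \<eta>. u \<eta> + L * dist \<xi> \<eta>)"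
    using u0 L by (intro cINF_greatest) auto
  show "(INF \<eta>. u \<eta> + L * dist \<xi> \<eta>) \<le> u \<xi>"
    using cINF_lower[OF bdd, of \<xi> \<xi>] by simp
  show "(\<And>\<eta>. r \<le> u \<eta> + L * dist \<xi> \<eta>) \<Longrightarrow> r \<le> (INF \<eta>. u \<eta> + L * dist \<xi> \<eta>)"
    by (intro cINF_greatest) auto
  have one: "(INF \<eta>. u \<eta> + L * dist x \<eta>) \<le> (INF \<eta>. u \<eta> + L * dist y \<eta>) + L * dist x y" for x y
  proof -
    have "(INF \<eta>. u \<eta> + L * dist x \<eta>) - L * dist x y \<le> (INF \<eta>. u \<eta> + L * dist y \<eta>)"
    proof (intro cINF_greatest)
      fix \<eta>
      have "(INF \<eta>. u \<eta> + L * dist x \<eta>) \<le> u \<eta> + L * dist x \<eta>"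
        using cINF_lower[OF bdd] by simp
      also have "\<dots> \<le> u \<eta> + L * dist y \<eta> + L * dist x y"
        using dist_triangle[of x \<eta> y] L by (simp add: algebra_simps mult_left_mono[OF _ L, of "dist x \<eta>" "dist x y + dist y \<eta>", simplified distrib_left])
      finally show "(INF \<eta>. u \<eta> + L * dist x \<eta>) - L * dist x y \<le> u \<eta> + L * dist y \<eta>" by simp
    qed auto
    then show ?thesis by simp
  qed
  show "L-lipschitz_on UNIV (\<lambda>\<xi>. INF \<eta>. u \<eta> + L * dist \<xi> \<eta>)"
  proof (rule lipschitz_onI[OF _ L])
    fix x y :: 'a
    show "dist (INF \<eta>. u \<eta> + L * dist x \<eta>) (INF \<eta>. u \<eta> + L * dist y \<eta>) \<le> L * dist x y"
      using one[of x y] one[of y x] by (simp add: dist_real_def dist_commute abs_le_iff)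
  qed
qed

lemma ev_real_gt: "eventually (\<lambda>k::nat. c < real k) sequentially"
  using filterlim_real_sequentially by (simp add: filterlim_at_top_dense)

lemma portmanteau_joint:
  fixes Qs :: "nat \<Rightarrow> 'a::real_normed_vector measure" and Q :: "'a measure"
    and f :: "'a \<Rightarrow> ennreal" and fs :: "nat \<Rightarrow> 'a \<Rightarrow> ennreal"
  assumes Qs: "\<And>n. prob_space (Qs n)" "\<And>n. sets (Qs n) = sets borel"
    and Q: "prob_space Q" "sets Q = sets borel"
    and wc: "weak_conv Qs Q"
    and hyp: "\<And>\<xi> c. c < f \<xi> \<Longrightarrow> \<exists>\<delta>>0. \<exists>N. \<forall>n\<ge>N. \<forall>\<eta>. dist \<eta> \<xi> < \<delta> \<longrightarrow> c < fs n \<eta>"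
  shows "(\<integral>\<^sup>+\<xi>. f \<xi> \<partial>Q) \<le> liminf (\<lambda>n. \<integral>\<^sup>+\<xi>. fs n \<xi> \<partial>Qs n)"
proof -
  define F where "F k \<eta> = (INF n\<in>{k..}. INF y\<in>ball \<eta> (1/Suc k). fs n y)" for k \<eta>
  define u where "u k \<eta> = enn2real (min (F k \<eta>) (of_nat k))" for k \<eta>
  define \<phi> where "\<phi> k \<xi> = (INF \<eta>. u k \<eta> + real k * dist \<xi> \<eta>)" for k \<xi>
  have u0: "0 \<le> u k \<eta>" for k \<eta> by (simp add: u_def)
  have mintop: "min (F k \<eta>) (of_nat k) < top" for k \<eta>
    by (simp add: min_less_iff_disj of_nat_less_top)
  have uk: "u k \<eta> \<le> k" for k \<eta>
    unfolding u_def using enn2real_mono[of "min (F k \<eta>) (of_nat k)" "of_nat k"] by (simp add: of_nat_less_top)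
  have u_le: "ennreal (u k \<eta>) \<le> fs n \<eta>" if "k \<le> n" for k n \<eta>
  proof -
    have "ennreal (u k \<eta>) = min (F k \<eta>) (of_nat k)" unfolding u_def using mintop by simp
    also have "\<dots> \<le> F k \<eta>" by simp
    also have "\<dots> \<le> fs n \<eta>" unfolding F_def using that
      by (intro INF_lower2[of n] INF_lower) auto
    finally show ?thesis .
  qed
  have ic1: "0 \<le> (INF \<eta>. u k \<eta> + real k * dist \<xi> \<eta>)" for k \<xi>
    using infconv(1)[of "u k" "real k"] u0 by simp
  have ic2: "(INF \<eta>. u k \<eta> + real k * dist \<xi> \<eta>) \<le> u k \<xi>" for k \<xi>
    using infconv(2)[of "u k" "real k"] u0 by simp
  have ic3: "r \<le> (INF \<eta>. u k \<eta> + real k * dist \<xi> \<eta>)" if "\<And>\<eta>. r \<le> u k \<eta> + real k * dist \<xi> \<eta>" for k \<xi> r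
    using infconv(3)[of "u k" "real k"] u0 that by simp
  have ic4: "(real k)-lipschitz_on UNIV (\<lambda>\<xi>. INF \<eta>. u k \<eta> + real k * dist \<xi> \<eta>)" for k
    using infconv(4)[of "u k" "real k"] u0 by simp
  have phi0: "0 \<le> \<phi> k \<xi>" for k \<xi> unfolding \<phi>_def using ic1 by simp
  have phiu: "\<phi> k \<xi> \<le> u k \<xi>" for k \<xi> unfolding \<phi>_def using ic2 by simp
  have phi_le: "ennreal (\<phi> k \<xi>) \<le> fs n \<xi>" if "k \<le> n" for k n \<xi>
    using u_le[OF that, of \<xi>] phiu[of k \<xi>] by (meson ennreal_leI order_trans)
  have cont: "continuous_on UNIV (\<phi> k)" for k
    unfolding \<phi>_def[abs_def] by (rule lipschitz_on_continuous_on[OF ic4])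
  have bnd: "norm (\<phi> k \<xi>) \<le> real k" for k \<xi>
    using phi0[of k \<xi>] phiu[of k \<xi>] uk[of k \<xi>] by simp
  have bdd: "bounded (range (\<phi> k))" for k
    using bnd by (auto simp: bounded_iff)
  have meas: "\<phi> k \<in> borel_measurable M" if "sets M = sets borel" for k and M :: "'a measure"
    using borel_measurable_continuous_onI[OF cont[of k]] measurable_cong_sets[OF that refl] by blast
  have intg: "integrable M (\<phi> k)" if "prob_space M" "sets M = sets borel" for k M
    using finite_measure.integrable_const_bound[OF prob_space.finite_measure[OF that(1)], of "\<phi> k" "real k"] bnd meas[OF that(2)] by auto
  have nneq: "(\<integral>\<^sup>+\<xi>. ennreal (\<phi> k \<xi>) \<partial>M) = ennreal (integral\<^sup>L M (\<phi> k))"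
    if "prob_space M" "sets M = sets borel" for k M
    using nn_integral_eq_integral[OF intg[OF that]] phi0 by auto
  have lim: "(\<lambda>n. \<integral>\<^sup>+\<xi>. ennreal (\<phi> k \<xi>) \<partial>Qs n) \<longlonglongrightarrow> (\<integral>\<^sup>+\<xi>. ennreal (\<phi> k \<xi>) \<partial>Q)" for k
  proof -
    have "(\<lambda>n. integral\<^sup>L (Qs n) (\<phi> k)) \<longlonglongrightarrow> integral\<^sup>L Q (\<phi> k)"
      using wc cont bdd unfolding weak_conv_def by blast
    then show ?thesis using nneq[OF Qs] nneq[OF Q] by simp
  qed
  define L where "L = liminf (\<lambda>n. \<integral>\<^sup>+\<xi>. fs n \<xi> \<partial>Qs n)"
  have Ak: "(\<integral>\<^sup>+\<xi>. ennreal (\<phi> k \<xi>) \<partial>Q) \<le> L" for k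
  proof -
    have "(\<integral>\<^sup>+\<xi>. ennreal (\<phi> k \<xi>) \<partial>Q) = liminf (\<lambda>n. \<integral>\<^sup>+\<xi>. ennreal (\<phi> k \<xi>) \<partial>Qs n)"
      using lim_imp_Liminf[OF _ lim[of k]] by simp
    also have "\<dots> \<le> L" unfolding L_def
      by (intro Liminf_mono eventually_mono[OF eventually_ge_at_top[of k]] nn_integral_mono phi_le) auto
    finally show ?thesis .
  qed
  have pw: "f \<xi> \<le> liminf (\<lambda>k. ennreal (\<phi> k \<xi>))" for \<xi>
  proof (unfold le_Liminf_iff, intro allI impI)
    fix y assume "y < f \<xi>"
    then obtain y' where yy: "y < y'" "y' < f \<xi>" using dense by blast
    from hyp[OF yy(2)] obtain \<delta> N where d: "\<delta> > 0" "\<forall>n\<ge>N. \<forall>\<eta>. dist \<eta> \<xi> < \<delta> \<longrightarrow> y' < fs n \<eta>" by blast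
    have "y' < top" using yy(2) top.not_eq_extremum by fastforce
    define r where "r = enn2real y'"
    have yr: "y' = ennreal r" "0 \<le> r" using \<open>y' < top\<close> by (auto simp: r_def)
    have ev: "eventually (\<lambda>k. N \<le> k \<and> r < real k \<and> 2/\<delta> < real k \<and> 2*r/\<delta> < real k) sequentially"
      by (intro eventually_conj eventually_ge_at_top ev_real_gt)
    show "eventually (\<lambda>k. y < ennreal (\<phi> k \<xi>)) sequentially"
    proof (rule eventually_mono[OF ev], elim conjE)
      fix k assume k: "N \<le> k" "r < real k" "2/\<delta> < real k" "2*r/\<delta> < real k"
      have "r \<le> \<phi> k \<xi>" unfolding \<phi>_def
      proof (rule ic3)
        fix \<eta>
        show "r \<le> u k \<eta> + real k * dist \<xi> \<eta>"
        proof (cases "dist \<eta> \<xi> < \<delta>/2")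
          case True
          have "y' \<le> F k \<eta>" unfolding F_def
          proof (intro INF_greatest)
            fix n y assume n: "n \<in> {k..}" and y: "y \<in> ball \<eta> (1/Suc k)"
            have "1/real (Suc k) < \<delta>/2" using k(3) d(1)
              by (simp add: field_simps)
            then have "dist y \<xi> < \<delta>" using y True dist_triangle[of y \<xi> \<eta>]
              by (simp add: dist_commute)
            then show "y' \<le> fs n y" using d(2) n k(1) by (meson atLeast_iff le_trans less_imp_le)
          qed
          moreover have "y' \<le> of_nat k" using k(2) yr
            by (metis ennreal_leI ennreal_of_nat_eq_real_of_nat less_imp_le)
          ultimately have "y' \<le> min (F k \<eta>) (of_nat k)" by simp
          then have "r \<le> u k \<eta>" unfolding u_def r_def using mintop by (rule enn2real_mono)
          then show ?thesis by (simp add: add_increasing2)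
        next
          case False
          have "r \<le> real k * (\<delta>/2)" using k(4) d(1) by (simp add: field_simps)
          also have "\<dots> \<le> real k * dist \<xi> \<eta>" using False by (intro mult_left_mono) (auto simp: dist_commute)
          finally show ?thesis using u0[of k \<eta>] by simp
        qed
      qed
      then have "y' \<le> ennreal (\<phi> k \<xi>)" using yr by (simp add: ennreal_leI)
      then show "y < ennreal (\<phi> k \<xi>)" using yy(1) by simp
    qed
  qed
  have "(\<integral>\<^sup>+\<xi>. f \<xi> \<partial>Q) \<le> (\<integral>\<^sup>+\<xi>. liminf (\<lambda>k. ennreal (\<phi> k \<xi>)) \<partial>Q)"
    by (intro nn_integral_mono pw)
  also have "\<dots> \<le> liminf (\<lambda>k. \<integral>\<^sup>+\<xi>. ennreal (\<phi> k \<xi>) \<partial>Q)"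
    using meas[OF Q(2)] by (intro nn_integral_liminf) auto
  also have "\<dots> \<le> L" by (intro Liminf_le) (auto simp: Ak)
  finally show ?thesis unfolding L_def .
qed


lemma psi_id:
  fixes t :: ereal assumes K: "0 \<le> K"
  shows "e2ennreal (max t (- ereal K) + ereal K) + min (e2ennreal (- t)) (ennreal K) = e2ennreal t + ennreal K"
proof (cases t)
  case (real r)
  have e1: "max t (- ereal K) + ereal K = ereal (max r (-K) + K)" using real by (simp add: max_def)
  have e2: "min (e2ennreal (- t)) (ennreal K) = ennreal (min (-r) K)" using real
    using K by (auto simp: min_def ennreal_le_iff2)
  show ?thesis
  proof (cases "0 \<le> r")
    case True
    then have "min (-r) K = -r" using K by simp
    then show ?thesis unfolding e1 e2 using True K real by (simp add: ennreal_neg ennreal_plus)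
  next
    case False
    show ?thesis
    proof (cases "r \<le> -K")
      case True
      then show ?thesis unfolding e1 e2 using False K real by (simp add: ennreal_neg max_def min_def)
    next
      case F2: False
      have "ennreal (max r (-K) + K) + ennreal (min (-r) K) = ennreal (max r (-K) + K + min (-r) K)"
        using F2 False K by (intro ennreal_plus[symmetric]) auto
      also have "max r (-K) + K + min (-r) K = K" using F2 False by auto
      finally show ?thesis unfolding e1 e2 using False real by (simp add: ennreal_neg)
    qed
  qed
qed (insert K, auto simp: e2ennreal_neg)


lemma negC_pw:
  fixes t :: ereal assumes K: "0 \<le> K"
  shows "e2ennreal (- t) \<le> min (e2ennreal (- t)) (ennreal K) + e2ennreal (- (if t \<le> - ereal K then t else 0))"
proof (cases "t \<le> - ereal K")
  case True then show ?thesis by (simp add: add_increasing)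
next
  case False
  then have "- t \<le> ereal K" by (metis ereal_uminus_le_reorder linorder_le_cases)
  then have "e2ennreal (- t) \<le> ennreal K" using e2ennreal_mono by fastforce
  then show ?thesis using False by simp
qed

lemma expect_bounds:
  fixes F :: "'a \<Rightarrow> ereal"
  assumes M: "prob_space M" and Fm[measurable]: "F \<in> borel_measurable M" and K: "0 \<le> K"
  defines "H \<equiv> \<integral>\<^sup>+\<xi>. e2ennreal (max (F \<xi>) (- ereal K) + ereal K) \<partial>M"
    and "C \<equiv> \<integral>\<^sup>+\<xi>. e2ennreal (- (if F \<xi> \<le> - ereal K then F \<xi> else 0)) \<partial>M"
  shows "enn2ereal H - ereal K - enn2ereal C \<le> expect M F"
    and "expect M F \<le> enn2ereal H - ereal K"
    and "expect M (\<lambda>\<xi>. if F \<xi> \<le> - ereal K then F \<xi> else 0) = - enn2ereal C"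
proof -
  define pos where "pos = (\<integral>\<^sup>+\<xi>. e2ennreal (F \<xi>) \<partial>M)"
  define neg where "neg = (\<integral>\<^sup>+\<xi>. e2ennreal (- F \<xi>) \<partial>M)"
  define m where "m = (\<integral>\<^sup>+\<xi>. min (e2ennreal (- F \<xi>)) (ennreal K) \<partial>M)"
  have ex: "expect M F = (if pos = \<infinity> then \<infinity> else enn2ereal pos - enn2ereal neg)"
    unfolding expect_def pos_def neg_def Let_def by simp
  have sp: "emeasure M (space M) = 1" using M prob_space.emeasure_space_1 by blast
  have idint: "H + m = pos + ennreal K"
  proof -
    have "H + m = (\<integral>\<^sup>+\<xi>. e2ennreal (max (F \<xi>) (- ereal K) + ereal K) + min (e2ennreal (- F \<xi>)) (ennreal K) \<partial>M)"
      unfolding H_def m_def by (rule nn_integral_add[symmetric]) measurable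
    also have "\<dots> = (\<integral>\<^sup>+\<xi>. e2ennreal (F \<xi>) + ennreal K \<partial>M)"
      using psi_id[OF K] by simp
    also have "\<dots> = pos + ennreal K" unfolding pos_def
      by (subst nn_integral_add) (auto simp: sp)
    finally show ?thesis .
  qed
  have mK: "m \<le> ennreal K"
  proof -
    have "m \<le> (\<integral>\<^sup>+\<xi>. ennreal K \<partial>M)" unfolding m_def by (intro nn_integral_mono) simp
    also have "\<dots> = ennreal K" by (simp add: sp)
    finally show ?thesis .
  qed
  have mneg: "m \<le> neg" unfolding m_def neg_def by (intro nn_integral_mono) simp
  have negC: "neg \<le> m + C"
  proof -
    have "neg \<le> (\<integral>\<^sup>+\<xi>. min (e2ennreal (- F \<xi>)) (ennreal K) + e2ennreal (- (if F \<xi> \<le> - ereal K then F \<xi> else 0)) \<partial>M)"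
      unfolding neg_def by (intro nn_integral_mono negC_pw[OF K])
    also have "\<dots> = m + C" unfolding m_def C_def by (rule nn_integral_add) measurable
    finally show ?thesis .
  qed
  have mfin: "m < top" using mK by (simp add: le_less_trans)
  show "enn2ereal H - ereal K - enn2ereal C \<le> expect M F"
  proof (cases "pos = \<infinity>")
    case True then show ?thesis using ex by simp
  next
    case pf: False
    have Hfin: "H < top"
    proof -
      have "H \<le> H + m" by simp
      also have "\<dots> = pos + ennreal K" by (rule idint)
      also have "\<dots> < top" using pf by (simp add: infinity_ennreal_def less_top)
      finally show ?thesis .
    qed
    show ?thesis
    proof (cases "C = \<infinity>")
      case True
      obtain h where "H = ennreal h" "0 \<le> h" using Hfin by (cases H) auto
      then show ?thesis using True by simp
    next
      case Cf: False
      have nfin: "neg \<noteq> top" using negC mfin Cf by (metis ennreal_add_eq_top infinity_ennreal_def neq_top_trans order_less_imp_not_eq top.not_eq_extremum)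
      obtain h where h: "H = ennreal h" "0 \<le> h" using Hfin by (cases H) auto
      obtain p where p: "pos = ennreal p" "0 \<le> p" using pf by (cases pos) auto
      obtain c where c: "C = ennreal c" "0 \<le> c" using Cf by (cases C) auto
      obtain n where n: "neg = ennreal n" "0 \<le> n" using nfin by (cases neg) auto
      obtain mm where mm: "m = ennreal mm" "0 \<le> mm" using mfin by (cases m) auto
      have "ennreal (h + mm) = ennreal (p + K)" using idint h mm p K by (simp add: ennreal_plus)
      then have e1: "h + mm = p + K" using h mm p K by (metis ennreal_inj add_nonneg_nonneg)
      have "ennreal n \<le> ennreal (mm + c)" using negC n mm c by (simp add: ennreal_plus)
      then have e2: "n \<le> mm + c" using mm c by (metis ennreal_le_iff add_nonneg_nonneg)
      show ?thesis using ex pf h p c n e1 e2 by simp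
    qed
  qed
  show "expect M F \<le> enn2ereal H - ereal K"
  proof (cases "pos = \<infinity>")
    case True
    then have "H = top" using idint mfin by (metis ennreal_add_eq_top infinity_ennreal_def top.not_eq_extremum)
    then show ?thesis by simp
  next
    case pf: False
    have Hfin: "H < top"
    proof -
      have "H \<le> H + m" by simp
      also have "\<dots> = pos + ennreal K" by (rule idint)
      also have "\<dots> < top" using pf by (simp add: infinity_ennreal_def less_top)
      finally show ?thesis .
    qed
    obtain h where h: "H = ennreal h" "0 \<le> h" using Hfin by (cases H) auto
    obtain p where p: "pos = ennreal p" "0 \<le> p" using pf by (cases pos) auto
    obtain mm where mm: "m = ennreal mm" "0 \<le> mm" using mfin by (cases m) auto
    have "ennreal (h + mm) = ennreal (p + K)" using idint h mm p K by (simp add: ennreal_plus)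
    then have e1: "h + mm = p + K" using h mm p K by (metis ennreal_inj add_nonneg_nonneg)
    show ?thesis
    proof (cases "neg = top")
      case True then show ?thesis using ex pf p by simp
    next
      case False
      obtain n where n: "neg = ennreal n" "0 \<le> n" using False by (cases neg) auto
      have "mm \<le> n" using mneg mm n by (simp add: ennreal_le_iff)
      then show ?thesis using ex pf h p n e1 by simp
    qed
  qed
  have z: "(\<integral>\<^sup>+\<xi>. e2ennreal (if F \<xi> \<le> - ereal K then F \<xi> else 0) \<partial>M) = 0"
  proof -
    have "(if F \<xi> \<le> - ereal K then F \<xi> else 0) \<le> 0" for \<xi>
    proof -
      have "- ereal K \<le> 0" using K by simp
      then show ?thesis by (auto intro: order_trans)
    qed
    then have "\<And>\<xi>. e2ennreal (if F \<xi> \<le> - ereal K then F \<xi> else 0) = 0"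
      by (rule e2ennreal_neg)
    then show ?thesis by simp
  qed
  show "expect M (\<lambda>\<xi>. if F \<xi> \<le> - ereal K then F \<xi> else 0) = - enn2ereal C"
    unfolding expect_def Let_def z C_def by (simp add: zero_ennreal.rep_eq)
qed


lemma psi_less_iff:
  fixes t :: ereal assumes K: "0 \<le> K" and c: "c < top"
  shows "c < e2ennreal (max t (- ereal K) + ereal K) \<longleftrightarrow> enn2ereal c - ereal K < t"
proof -
  obtain r where r: "c = ennreal r" "0 \<le> r" using c by (cases c) auto
  show ?thesis
  proof (cases t)
    case (real s)
    have "max t (- ereal K) + ereal K = ereal (max s (-K) + K)" using real by (simp add: max_def)
    moreover have "ennreal r < ennreal (max s (-K) + K) \<longleftrightarrow> r < max s (-K) + K"
      using r(2) by (simp add: ennreal_less_iff)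
    ultimately show ?thesis using r real K by auto
  qed (use r K in auto)
qed

lemma shift_meas:
  fixes g :: "'a::real_normed_vector \<Rightarrow> ereal"
  assumes "g \<in> borel_measurable borel" "sets M = sets borel"
  shows "(\<lambda>\<xi>. g (y + \<xi>)) \<in> borel_measurable M"
proof -
  have m1: "(\<lambda>\<xi>. y + \<xi>) \<in> borel_measurable borel"
    by (intro borel_measurable_continuous_onI continuous_intros)
  have "(\<lambda>\<xi>. g (y + \<xi>)) \<in> borel_measurable borel"
    by (rule measurable_compose[OF m1 assms(1)])
  then show ?thesis using measurable_cong_sets[OF assms(2) refl] by blast
qed

lemma joint_seq:
  fixes a :: "nat \<Rightarrow> 'a::real_normed_vector \<Rightarrow> ereal"
  assumes xs: "xs \<longlonglongrightarrow> x"
  shows "liminf_joint a x \<le> liminf (\<lambda>n. a n (xs n))"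
  unfolding liminf_joint_def
proof (intro SUP_least)
  fix \<delta> :: real and N assume "\<delta> \<in> {0<..}"
  then have ev: "eventually (\<lambda>n. norm (xs n - x) < \<delta>) sequentially"
    using xs unfolding tendsto_iff dist_norm by auto
  show "(INF \<nu>\<in>{N..}. INF y\<in>{y. norm (y - x) < \<delta>}. a \<nu> y) \<le> liminf (\<lambda>n. a n (xs n))"
    by (intro Liminf_bounded eventually_mono[OF eventually_conj[OF ev eventually_ge_at_top[of N]]])
       (auto intro!: INF_lower2)
qed

lemma hyp_from_iii:
  fixes g :: "'a::real_normed_vector \<Rightarrow> ereal" and gs :: "nat \<Rightarrow> 'a \<Rightarrow> ereal"
  assumes iii: "\<forall>x. g x \<le> liminf_joint gs x" and xs: "xs \<longlonglongrightarrow> x" and K: "0 \<le> K"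
    and c: "c < e2ennreal (max (g (x + \<xi>)) (- ereal K) + ereal K)"
  shows "\<exists>\<delta>>0. \<exists>N. \<forall>n\<ge>N. \<forall>\<eta>. dist \<eta> \<xi> < \<delta> \<longrightarrow> c < e2ennreal (max (gs n (xs n + \<eta>)) (- ereal K) + ereal K)"
proof -
  have ct: "c < top" using c top.not_eq_extremum by fastforce
  have "enn2ereal c - ereal K < g (x + \<xi>)" using c psi_less_iff[OF K ct] by blast
  also have "\<dots> \<le> liminf_joint gs (x + \<xi>)" using iii by blast
  finally obtain \<delta> N where d: "\<delta> > 0"
    "enn2ereal c - ereal K < (INF \<nu>\<in>{N..}. INF y\<in>{y. norm (y - (x + \<xi>)) < \<delta>}. gs \<nu> y)"
    unfolding liminf_joint_def less_SUP_iff by auto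
  have ev: "eventually (\<lambda>n. norm (xs n - x) < \<delta>/2) sequentially"
    using xs d(1) unfolding tendsto_iff dist_norm by (meson half_gt_zero)
  then obtain N2 where N2: "\<forall>n\<ge>N2. norm (xs n - x) < \<delta>/2" unfolding eventually_sequentially by blast
  show ?thesis
  proof (intro exI[of _ "\<delta>/2"] exI[of _ "max N N2"] conjI allI impI)
    show "0 < \<delta>/2" using d(1) by simp
    fix n \<eta> assume n: "max N N2 \<le> n" and de: "dist \<eta> \<xi> < \<delta>/2"
    have "norm ((xs n + \<eta>) - (x + \<xi>)) \<le> norm (xs n - x) + norm (\<eta> - \<xi>)"
      by (metis add_diff_add norm_triangle_ineq)
    also have "\<dots> < \<delta>" using N2[rule_format, of n] n de by (simp add: dist_norm)
    finally have "enn2ereal c - ereal K < gs n (xs n + \<eta>)"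
      using d(2) n by (auto dest!: less_INF_D[where i=n] less_INF_D[where i="xs n + \<eta>"])
    then show "c < e2ennreal (max (gs n (xs n + \<eta>)) (- ereal K) + ereal K)"
      using psi_less_iff[OF K ct] by blast
  qed
qed

lemma ereal_arith1:
  fixes a b :: ereal
  assumes "ereal p < a" "ereal q < - b" "0 \<le> b"
  shows "ereal (p - K + q) < a - ereal K - b"
  using assms by (cases a; cases b) auto


lemma liminf_main:
  fixes g :: "'a::real_normed_vector \<Rightarrow> ereal" and gs :: "nat \<Rightarrow> 'a \<Rightarrow> ereal"
    and Qs :: "nat \<Rightarrow> 'a measure" and Q :: "'a measure"
  assumes Qs: "\<And>n. prob_space (Qs n)" "\<And>n. sets (Qs n) = sets borel"
    and Q: "prob_space Q" "sets Q = sets borel"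
    and wc: "weak_conv Qs Q" and xs: "xs \<longlonglongrightarrow> x"
    and mg: "g \<in> borel_measurable borel" and mgs: "\<And>n. gs n \<in> borel_measurable borel"
    and iii: "\<forall>x. g x \<le> liminf_joint gs x"
    and iv: "expect Q (\<lambda>\<xi>. g (x + \<xi>)) > - \<infinity>"
    and ii: "Liminf at_top (\<lambda>K::real. liminf_joint
           (\<lambda>n y. expect (Qs n) (\<lambda>\<xi>. if gs n (y + \<xi>) \<le> - ereal K then gs n (y + \<xi>) else 0)) x) = 0"
  shows "expect Q (\<lambda>\<xi>. g (x + \<xi>)) \<le> liminf (\<lambda>n. expect (Qs n) (\<lambda>\<xi>. gs n (xs n + \<xi>)))"
proof (unfold le_Liminf_iff, intro allI impI)
  define E where "E = expect Q (\<lambda>\<xi>. g (x + \<xi>))"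
  fix c assume c: "c < expect Q (\<lambda>\<xi>. g (x + \<xi>))"
  obtain z1 where z1: "c < z1" "z1 < E" using c dense unfolding E_def by blast
  obtain z2 where z2: "z1 < z2" "z2 < E" using z1(2) dense by blast
  obtain c1 where c1: "z1 = ereal c1" using z1 z2 by (cases z1) auto
  obtain c2 where c2: "z2 = ereal c2" using z1 z2 by (cases z2) auto
  have c12: "c1 < c2" using z2(1) c1 c2 by simp
  define \<epsilon> where "\<epsilon> = c2 - c1"
  define L where "L K = liminf_joint
           (\<lambda>n y. expect (Qs n) (\<lambda>\<xi>. if gs n (y + \<xi>) \<le> - ereal K then gs n (y + \<xi>) else 0)) x" for K
  have "ereal (- \<epsilon>) < 0" using c12 by (simp add: \<epsilon>_def)
  moreover have "0 \<le> Liminf at_top L" using ii unfolding L_def[abs_def] by simp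
  then have "\<forall>y<0. eventually (\<lambda>K. y < L K) at_top" using le_Liminf_iff[of 0 at_top L] by blast
  ultimately have "eventually (\<lambda>K. ereal (- \<epsilon>) < L K) at_top" by blast
  then obtain N where N: "\<And>K. K \<ge> N \<Longrightarrow> ereal (- \<epsilon>) < L K"
    unfolding eventually_at_top_linorder by blast
  define K where "K = max N 0"
  have K0: "0 \<le> K" and KL: "ereal (- \<epsilon>) < L K" using N by (auto simp: K_def)
  define Gn where "Gn n \<xi> = gs n (xs n + \<xi>)" for n \<xi>
  define H where "H = (\<integral>\<^sup>+\<xi>. e2ennreal (max (g (x + \<xi>)) (- ereal K) + ereal K) \<partial>Q)"
  define Hn where "Hn n = (\<integral>\<^sup>+\<xi>. e2ennreal (max (Gn n \<xi>) (- ereal K) + ereal K) \<partial>Qs n)" for n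
  define Cn where "Cn n = (\<integral>\<^sup>+\<xi>. e2ennreal (- (if Gn n \<xi> \<le> - ereal K then Gn n \<xi> else 0)) \<partial>Qs n)" for n
  have mGn: "Gn n \<in> borel_measurable (Qs n)" for n
    unfolding Gn_def[abs_def] by (rule shift_meas[OF mgs Qs(2)])
  have up: "E \<le> enn2ereal H - ereal K"
    unfolding E_def H_def by (rule expect_bounds(2)[OF Q(1) shift_meas[OF mg Q(2)] K0])
  have low: "enn2ereal (Hn n) - ereal K - enn2ereal (Cn n) \<le> expect (Qs n) (Gn n)" for n
    unfolding Hn_def Cn_def by (rule expect_bounds(1)[OF Qs(1) mGn K0])
  have tr: "expect (Qs n) (\<lambda>\<xi>. if Gn n \<xi> \<le> - ereal K then Gn n \<xi> else 0) = - enn2ereal (Cn n)" for n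
    unfolding Cn_def by (rule expect_bounds(3)[OF Qs(1) mGn K0])
  have A: "H \<le> liminf Hn"
    unfolding H_def Hn_def
  proof (rule portmanteau_joint[OF Qs Q wc])
    fix \<xi> c assume "c < e2ennreal (max (g (x + \<xi>)) (- ereal K) + ereal K)"
    then show "\<exists>\<delta>>0. \<exists>N. \<forall>n\<ge>N. \<forall>\<eta>. dist \<eta> \<xi> < \<delta> \<longrightarrow> c < e2ennreal (max (Gn n \<eta>) (- ereal K) + ereal K)"
      unfolding Gn_def by (rule hyp_from_iii[OF iii xs K0])
  qed
  have ev1: "eventually (\<lambda>n. ereal (c2 + K) < enn2ereal (Hn n)) sequentially"
  proof -
    have HK: "ereal (c2 + K) < enn2ereal H"
    proof -
      have "ereal c2 < enn2ereal H - ereal K" using z2(2) up c2 by simp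
      then show ?thesis by (cases "enn2ereal H") auto
    qed
    show ?thesis
    proof (cases "c2 + K < 0")
      case True
      then have "ereal (c2 + K) < 0" by simp
      then show ?thesis by (intro always_eventually allI) (rule less_le_trans[OF _ enn2ereal_nonneg])
    next
      case False
      then have "ennreal (c2 + K) < H" using HK by (simp add: less_ennreal.rep_eq)
      then have "eventually (\<lambda>n. ennreal (c2 + K) < Hn n) sequentially"
        using A le_Liminf_iff by blast
      then show ?thesis
        by (rule eventually_mono) (use False in \<open>simp add: less_ennreal.rep_eq\<close>)
    qed
  qed
  have ev2: "eventually (\<lambda>n. ereal (- \<epsilon>) < - enn2ereal (Cn n)) sequentially"
  proof -
    have "L K \<le> liminf (\<lambda>n. expect (Qs n) (\<lambda>\<xi>. if gs n (xs n + \<xi>) \<le> - ereal K then gs n (xs n + \<xi>) else 0))"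
      unfolding L_def by (rule joint_seq[OF xs])
    also have "\<dots> = liminf (\<lambda>n. - enn2ereal (Cn n))"
      using tr unfolding Gn_def by simp
    finally have "ereal (- \<epsilon>) < liminf (\<lambda>n. - enn2ereal (Cn n))" using KL by simp
    moreover have "\<forall>y<liminf (\<lambda>n. - enn2ereal (Cn n)). eventually (\<lambda>n. y < - enn2ereal (Cn n)) sequentially"
      using le_Liminf_iff[of "liminf (\<lambda>n. - enn2ereal (Cn n))" sequentially "\<lambda>n. - enn2ereal (Cn n)"] by blast
    ultimately show ?thesis by blast
  qed
  show "eventually (\<lambda>n. c < expect (Qs n) (\<lambda>\<xi>. gs n (xs n + \<xi>))) sequentially"
  proof (rule eventually_mono[OF eventually_conj[OF ev1 ev2]], elim conjE)
    fix n assume a: "ereal (c2 + K) < enn2ereal (Hn n)" and b: "ereal (- \<epsilon>) < - enn2ereal (Cn n)"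
    have "c < ereal c1" using z1 c1 by simp
    also have "ereal c1 = ereal (c2 + K - K + - \<epsilon>)" by (simp add: \<epsilon>_def)
    also have "\<dots> < enn2ereal (Hn n) - ereal K - enn2ereal (Cn n)"
      by (rule ereal_arith1[OF a b enn2ereal_nonneg])
    also have "\<dots> \<le> expect (Qs n) (Gn n)" by (rule low)
    finally show "c < expect (Qs n) (\<lambda>\<xi>. gs n (xs n + \<xi>))" unfolding Gn_def by simp
  qed
qed


lemma ereal_arith2:
  fixes A B :: ennreal
  assumes "enn2ereal A < ereal s" "ereal t < enn2ereal B"
  shows "enn2ereal A - enn2ereal B < ereal (s - t)"
  using assms by (cases "enn2ereal A"; cases "enn2ereal B") auto

lemma enn_lt_real: "0 \<le> r \<Longrightarrow> A < ennreal r \<Longrightarrow> enn2ereal A < ereal r"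
  by (metis enn2ereal_ennreal less_ennreal.rep_eq)

lemma real_lt_enn: "0 \<le> r \<Longrightarrow> ennreal r < A \<Longrightarrow> ereal r < enn2ereal A"
  by (metis enn2ereal_ennreal less_ennreal.rep_eq)

lemma limsup_main:
  fixes G :: "'a \<Rightarrow> ereal" and Gs :: "nat \<Rightarrow> 'a \<Rightarrow> ereal" and h :: "'a \<Rightarrow> real"
  assumes P: "prob_space P" and mG[measurable]: "G \<in> borel_measurable P"
    and mGs[measurable]: "\<And>n. Gs n \<in> borel_measurable P"
    and hint: "integrable P h" and h0: "\<And>\<xi>. 0 \<le> h \<xi>"
    and bnd: "AE \<xi> in P. \<forall>n. Gs n \<xi> \<le> ereal (h \<xi>)"
    and conv: "\<And>\<xi>. (\<lambda>n. Gs n \<xi>) \<longlonglongrightarrow> G \<xi>"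
    and fin: "expect P G > - \<infinity>"
  shows "limsup (\<lambda>n. expect P (Gs n)) \<le> expect P G"
proof -
  define pos where "pos = (\<integral>\<^sup>+\<xi>. e2ennreal (G \<xi>) \<partial>P)"
  define neg where "neg = (\<integral>\<^sup>+\<xi>. e2ennreal (- G \<xi>) \<partial>P)"
  define posn where "posn n = (\<integral>\<^sup>+\<xi>. e2ennreal (Gs n \<xi>) \<partial>P)" for n
  define negn where "negn n = (\<integral>\<^sup>+\<xi>. e2ennreal (- Gs n \<xi>) \<partial>P)" for n
  have hm[measurable]: "h \<in> borel_measurable P" using hint by auto
  have hfin: "(\<integral>\<^sup>+\<xi>. ennreal (h \<xi>) \<partial>P) < top"
    using nn_integral_eq_integral[OF hint] h0 by simp
  have bnd': "AE \<xi> in P. e2ennreal (Gs n \<xi>) \<le> ennreal (h \<xi>)" for n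
    using bnd by eventually_elim (metis e2ennreal_ereal e2ennreal_mono)
  have posn_le: "posn n \<le> (\<integral>\<^sup>+\<xi>. ennreal (h \<xi>) \<partial>P)" for n
    unfolding posn_def by (rule nn_integral_mono_AE[OF bnd'])
  have plim: "posn \<longlonglongrightarrow> pos" unfolding posn_def[abs_def] pos_def
    by (rule nn_integral_dominated_convergence[where w="\<lambda>\<xi>. ennreal (h \<xi>)"])
       (use bnd' hfin conv in \<open>auto intro!: tendsto_e2ennrealI\<close>)
  have pos_le: "pos \<le> (\<integral>\<^sup>+\<xi>. ennreal (h \<xi>) \<partial>P)"
    using tendsto_upperbound[OF plim always_eventually[OF allI[OF posn_le]]] by simp
  have pfin: "pos < top" using pos_le hfin by (rule le_less_trans)
  have negl: "neg \<le> liminf negn"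
  proof -
    have "neg = (\<integral>\<^sup>+\<xi>. liminf (\<lambda>n. e2ennreal (- Gs n \<xi>)) \<partial>P)"
      unfolding neg_def
      by (intro nn_integral_cong lim_imp_Liminf[symmetric] tendsto_e2ennrealI tendsto_uminus_ereal conv) auto
    also have "\<dots> \<le> liminf negn" unfolding negn_def by (rule nn_integral_liminf) measurable
    finally show ?thesis .
  qed
  have ex: "expect P G = enn2ereal pos - enn2ereal neg"
    unfolding expect_def pos_def[symmetric] neg_def[symmetric] Let_def using pfin by simp
  have exn: "expect P (Gs n) = enn2ereal (posn n) - enn2ereal (negn n)" for n
  proof -
    have "posn n < top" using posn_le[of n] hfin by (rule le_less_trans)
    then show ?thesis
      unfolding expect_def posn_def[symmetric] negn_def[symmetric] Let_def by simp
  qed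
  have nfin: "neg < top"
  proof (rule ccontr)
    assume "\<not> neg < top"
    then have "neg = top" using top.not_eq_extremum by blast
    then show False using fin ex pfin by (cases "enn2ereal pos") auto
  qed
  obtain p where p: "pos = ennreal p" "0 \<le> p" using pfin by (cases pos) auto
  obtain q where q: "neg = ennreal q" "0 \<le> q" using nfin by (cases neg) auto
  show ?thesis
  proof (unfold Limsup_le_iff, intro allI impI)
    fix y assume y: "expect P G < y"
    show "eventually (\<lambda>n. expect P (Gs n) < y) sequentially"
    proof (cases y)
      case PInf
      have "expect P (Gs n) < \<infinity>" for n
      proof -
        have "posn n < top" using posn_le[of n] hfin by (rule le_less_trans)
        then obtain a where "posn n = ennreal a" "0 \<le> a" by (cases "posn n") auto
        then show ?thesis unfolding exn by (cases "enn2ereal (negn n)") auto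
      qed
      then show ?thesis using PInf by simp
    next
      case (real r)
      have rpq: "p - q < r" using y ex p q real by simp
      define \<epsilon> where "\<epsilon> = (r - (p - q)) / 3"
      have e0: "0 < \<epsilon>" using rpq by (simp add: \<epsilon>_def)
      have ev1: "eventually (\<lambda>n. enn2ereal (posn n) < ereal (p + \<epsilon>)) sequentially"
      proof -
        have "pos < ennreal (p + \<epsilon>)" using p e0 by (simp add: ennreal_less_iff)
        then have "eventually (\<lambda>n. posn n < ennreal (p + \<epsilon>)) sequentially"
          using order_tendstoD(2)[OF plim] by blast
        then show ?thesis
          by (rule eventually_mono) (rule enn_lt_real, use p e0 in auto)
      qed
      have ev2: "eventually (\<lambda>n. ereal (q - \<epsilon>) < enn2ereal (negn n)) sequentially"
      proof (cases "q - \<epsilon> < 0")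
        case True
        then have "ereal (q - \<epsilon>) < 0" by simp
        then show ?thesis by (intro always_eventually allI) (rule less_le_trans[OF _ enn2ereal_nonneg])
      next
        case False
        have "ennreal (q - \<epsilon>) < neg" using q e0 False by (simp add: ennreal_less_iff)
        then have "eventually (\<lambda>n. ennreal (q - \<epsilon>) < negn n) sequentially"
          using negl le_Liminf_iff by blast
        then show ?thesis
          by (rule eventually_mono) (rule real_lt_enn, use False in auto)
      qed
      show ?thesis
      proof (rule eventually_mono[OF eventually_conj[OF ev1 ev2]], elim conjE)
        fix n assume a: "enn2ereal (posn n) < ereal (p + \<epsilon>)" and b: "ereal (q - \<epsilon>) < enn2ereal (negn n)"
        have 1: "expect P (Gs n) < ereal ((p + \<epsilon>) - (q - \<epsilon>))"
          unfolding exn by (rule ereal_arith2[OF a b])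
        have "(p + \<epsilon>) - (q - \<epsilon>) \<le> r" using rpq unfolding \<epsilon>_def by (simp add: field_simps)
        then have "ereal ((p + \<epsilon>) - (q - \<epsilon>)) \<le> y" using real by simp
        with 1 show "expect P (Gs n) < y" by (rule less_le_trans)
      qed
    next
      case MInf
      then show ?thesis using y by simp
    qed
  qed
qed


lemma ereal_arith3: "ereal m < a \<Longrightarrow> r - m < t \<Longrightarrow> ereal r < a + ereal t"
  by (cases a) auto

theorem proposition4p2:
  fixes PP :: "'a::real_normed_vector measure set"
    and d :: "'a measure \<Rightarrow> 'a measure \<Rightarrow> real"
    and g :: "'a \<Rightarrow> ereal" and gs :: "nat \<Rightarrow> 'a \<Rightarrow> ereal"
    and P :: "'a measure" and Ps :: "nat \<Rightarrow> 'a measure"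
    and \<theta> :: "nat \<Rightarrow> real"
  assumes PP: "prob_measures_on_borel PP"
    and d_metric: "metric_on PP d"
    and d_weak: "metrizes_weak_conv PP d"
    and P_in: "P \<in> PP" and Ps_in: "\<forall>n. Ps n \<in> PP"
    and \<theta>_nonneg: "\<forall>n. 0 \<le> \<theta> n"
    and \<theta>_inf: "filterlim \<theta> at_top sequentially"
    and \<theta>_d: "(\<lambda>n. \<theta> n * d (Ps n) P) \<longlonglongrightarrow> 0"
    and meas_g: "g \<in> borel_measurable borel"
    and meas_gs: "\<forall>n. gs n \<in> borel_measurable borel"
    and cond_ii: "\<forall>x Qs Q. (\<forall>n. Qs n \<in> PP) \<and> Q \<in> PP \<and> (\<lambda>n. d (Qs n) Q) \<longlonglongrightarrow> 0 \<longrightarrow>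
        Liminf at_top (\<lambda>K::real. liminf_joint
           (\<lambda>n y. expect (Qs n) (\<lambda>\<xi>. if gs n (y + \<xi>) \<le> - ereal K then gs n (y + \<xi>) else 0)) x) = 0"
    and cond_iii: "\<forall>x. g x \<le> liminf_joint gs x"
    and cond_iv: "\<forall>x. \<forall>Q\<in>PP. expect Q (\<lambda>\<xi>. g (x + \<xi>)) > - \<infinity>"
    and cond_v: "\<forall>x. \<exists>h::'a \<Rightarrow> real. (\<forall>\<xi>. 0 \<le> h \<xi>) \<and> integrable P h \<and>
        (AE \<xi> in P. \<forall>n. gs n (x + \<xi>) \<le> ereal (h \<xi>)) \<and> (\<lambda>n. gs n x) \<longlonglongrightarrow> g x"
  shows "epi_converges (UNIV \<times> PP)
           (\<lambda>zs z. (\<lambda>n. fst (zs n)) \<longlonglongrightarrow> fst z \<and> (\<lambda>n. d (snd (zs n)) (snd z)) \<longlonglongrightarrow> 0)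
           (\<lambda>n (x, Q). expect Q (\<lambda>\<xi>. gs n (x + \<xi>)) + ereal (\<theta> n * d Q (Ps n)))
           (\<lambda>(x, Q). expect Q (\<lambda>\<xi>. g (x + \<xi>)) + iota {P} Q)"
proof -
  have PPp: "prob_space Q" "sets Q = sets borel" if "Q \<in> PP" for Q
    using PP that unfolding prob_measures_on_borel_def by auto
  have d0: "0 \<le> d a b" and deq: "d a b = 0 \<longleftrightarrow> a = b" and dsym: "d a b = d b a"
    if "a \<in> PP" "b \<in> PP" for a b
    using d_metric that unfolding metric_on_def by auto
  have tri: "d a c \<le> d a b + d b c" if "a \<in> PP" "b \<in> PP" "c \<in> PP" for a b c
    using d_metric that unfolding metric_on_def by auto
  have mgs: "\<And>n. gs n \<in> borel_measurable borel" using meas_gs by blast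
  have dP: "(\<lambda>n. d (Ps n) P) \<longlonglongrightarrow> 0"
  proof (rule tendsto_sandwich[of "\<lambda>_. 0" _ _ "\<lambda>n. \<theta> n * d (Ps n) P"])
    have ev: "eventually (\<lambda>n. 1 \<le> \<theta> n) sequentially"
      using \<theta>_inf by (simp add: filterlim_at_top)
    show "eventually (\<lambda>n. 0 \<le> d (Ps n) P) sequentially"
      using d0 Ps_in P_in by auto
    show "eventually (\<lambda>n. d (Ps n) P \<le> \<theta> n * d (Ps n) P) sequentially"
    proof (rule eventually_mono[OF ev])
      fix n assume "1 \<le> \<theta> n"
      then show "d (Ps n) P \<le> \<theta> n * d (Ps n) P"
        using d0[of "Ps n" P] Ps_in P_in mult_right_mono[of 1 "\<theta> n" "d (Ps n) P"] by auto
    qed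
  qed (auto simp: \<theta>_d)
  define E where "E x Q = expect Q (\<lambda>\<xi>. g (x + \<xi>))" for x Q
  have LI: "E x Q + iota {P} Q \<le> liminf (\<lambda>n. expect (Qs n) (\<lambda>\<xi>. gs n (xs n + \<xi>)) + ereal (\<theta> n * d (Qs n) (Ps n)))"
    if Q: "Q \<in> PP" and Qs: "\<forall>n. Qs n \<in> PP" and xs: "xs \<longlonglongrightarrow> x" and dQ: "(\<lambda>n. d (Qs n) Q) \<longlonglongrightarrow> 0"
    for x Q xs Qs
  proof -
    have wc: "weak_conv Qs Q" using d_weak Q Qs dQ unfolding metrizes_weak_conv_def by blast
    have Efin: "E x Q > - \<infinity>" using cond_iv Q unfolding E_def by blast
    have Qsp: "\<And>n. prob_space (Qs n)" "\<And>n. sets (Qs n) = sets borel" using PPp Qs by auto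
    have lim: "E x Q \<le> liminf (\<lambda>n. expect (Qs n) (\<lambda>\<xi>. gs n (xs n + \<xi>)))"
      unfolding E_def
      by (rule liminf_main[OF Qsp PPp(1)[OF Q] PPp(2)[OF Q] wc xs meas_g mgs cond_iii])
        (use Qs cond_iv Q spec[OF spec[OF spec[OF cond_ii, of x], of Qs], of Q] dQ in auto)
    have b0: "0 \<le> \<theta> n * d (Qs n) (Ps n)" for n
      using \<theta>_nonneg d0[of "Qs n" "Ps n"] Qs Ps_in by auto
    show ?thesis
    proof (cases "Q = P")
      case True
      have "E x Q \<le> liminf (\<lambda>n. expect (Qs n) (\<lambda>\<xi>. gs n (xs n + \<xi>)))" by (rule lim)
      also have "\<dots> \<le> liminf (\<lambda>n. expect (Qs n) (\<lambda>\<xi>. gs n (xs n + \<xi>)) + ereal (\<theta> n * d (Qs n) (Ps n)))"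
      proof (intro Liminf_mono always_eventually allI)
        fix n show "expect (Qs n) (\<lambda>\<xi>. gs n (xs n + \<xi>)) \<le> expect (Qs n) (\<lambda>\<xi>. gs n (xs n + \<xi>)) + ereal (\<theta> n * d (Qs n) (Ps n))"
          using b0[of n] by (simp add: add_increasing2)
      qed
      finally show ?thesis using True by (simp add: iota_def)
    next
      case False
      have io: "E x Q + iota {P} Q = \<infinity>" using False Efin by (simp add: iota_def)
      obtain m where m: "ereal m < E x Q"
      proof (cases "E x Q")
        case (real r) then show ?thesis using that[of "r - 1"] by simp
      next
        case PInf then show ?thesis using that[of 0] by simp
      qed (use Efin in simp)
      have eva: "eventually (\<lambda>n. ereal m < expect (Qs n) (\<lambda>\<xi>. gs n (xs n + \<xi>))) sequentially"
        using m lim le_Liminf_iff by (metis less_le_trans)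
      define D where "D = d Q P"
      have D0: "0 < D" using d0[OF Q P_in] deq[OF Q P_in] False unfolding D_def by auto
      have ev1: "eventually (\<lambda>n. d (Qs n) Q < D/4) sequentially"
        using order_tendstoD(2)[OF dQ, of "D/4"] D0 by simp
      have ev2: "eventually (\<lambda>n. d (Ps n) P < D/4) sequentially"
        using order_tendstoD(2)[OF dP, of "D/4"] D0 by simp
      show ?thesis
      proof (unfold io le_Liminf_iff, intro allI impI)
        fix y :: ereal assume "y < \<infinity>"
        then obtain r where yr: "y \<le> ereal r" by (cases y) auto
        define R where "R = max (r - m) 0"
        have ev3: "eventually (\<lambda>n. 2 * R / D < \<theta> n) sequentially"
          using \<theta>_inf by (simp add: filterlim_at_top_dense)
        show "eventually (\<lambda>n. y < expect (Qs n) (\<lambda>\<xi>. gs n (xs n + \<xi>)) + ereal (\<theta> n * d (Qs n) (Ps n))) sequentially"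
        proof (rule eventually_mono[OF eventually_conj[OF eva eventually_conj[OF ev1 eventually_conj[OF ev2 ev3]]]], elim conjE)
          fix n assume a: "ereal m < expect (Qs n) (\<lambda>\<xi>. gs n (xs n + \<xi>))"
            and n1: "d (Qs n) Q < D/4" and n2: "d (Ps n) P < D/4" and n3: "2 * R / D < \<theta> n"
          have "D \<le> d Q (Qs n) + d (Qs n) P" unfolding D_def using tri[OF Q Qs[rule_format] P_in] .
          also have "d (Qs n) P \<le> d (Qs n) (Ps n) + d (Ps n) P" using tri[OF Qs[rule_format] Ps_in[rule_format] P_in] .
          finally have "D \<le> d Q (Qs n) + (d (Qs n) (Ps n) + d (Ps n) P)" by simp
          then have dd: "D/2 \<le> d (Qs n) (Ps n)" using n1 n2 dsym[OF Q Qs[rule_format, of n]] by simp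
          have "R < \<theta> n * (D/2)" using n3 D0 by (simp add: field_simps)
          also have "\<dots> \<le> \<theta> n * d (Qs n) (Ps n)" using dd \<theta>_nonneg by (intro mult_left_mono) auto
          finally have "r - m < \<theta> n * d (Qs n) (Ps n)" unfolding R_def by simp
          then have "ereal r < expect (Qs n) (\<lambda>\<xi>. gs n (xs n + \<xi>)) + ereal (\<theta> n * d (Qs n) (Ps n))"
            by (rule ereal_arith3[OF a])
          then show "y < expect (Qs n) (\<lambda>\<xi>. gs n (xs n + \<xi>)) + ereal (\<theta> n * d (Qs n) (Ps n))"
            using yr by (rule le_less_trans[rotated])
        qed
      qed
    qed
  qed
  show ?thesis
    unfolding epi_converges_def
  proof (intro ballI conjI allI impI)
    fix z :: "'a \<times> 'a measure" assume "z \<in> UNIV \<times> PP"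
    then obtain x Q where z: "z = (x, Q)" and Q: "Q \<in> PP" by auto
    {
      fix zs :: "nat \<Rightarrow> 'a \<times> 'a measure" assume zs: "(\<forall>n. zs n \<in> UNIV \<times> PP) \<and>
        (\<lambda>n. fst (zs n)) \<longlonglongrightarrow> fst z \<and> (\<lambda>n. d (snd (zs n)) (snd z)) \<longlonglongrightarrow> 0"
      have "E x Q + iota {P} Q \<le> liminf (\<lambda>n. expect (snd (zs n)) (\<lambda>\<xi>. gs n (fst (zs n) + \<xi>)) + ereal (\<theta> n * d (snd (zs n)) (Ps n)))"
        by (rule LI[OF Q]) (use zs z in \<open>auto simp: mem_Times_iff\<close>)
      then show "(case z of (x, Q) \<Rightarrow> expect Q (\<lambda>\<xi>. g (x + \<xi>)) + iota {P} Q)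
         \<le> liminf (\<lambda>n. (case zs n of (x, Q) \<Rightarrow> expect Q (\<lambda>\<xi>. gs n (x + \<xi>)) + ereal (\<theta> n * d Q (Ps n))))"
        unfolding z E_def by (simp add: case_prod_beta)
    }
  next
    fix z :: "'a \<times> 'a measure" assume "z \<in> UNIV \<times> PP"
    then obtain x Q where z: "z = (x, Q)" and Q: "Q \<in> PP" by auto
    define c where "c n = expect Q (\<lambda>\<xi>. gs n (x + \<xi>)) + ereal (\<theta> n * d Q (Ps n))" for n
    have dQQ: "d Q Q = 0" using deq[OF Q Q] by simp
    have LIc: "E x Q + iota {P} Q \<le> liminf c"
      unfolding c_def by (rule LI[OF Q]) (use Q dQQ in auto)
    have "c \<longlonglongrightarrow> E x Q + iota {P} Q"
    proof (cases "Q = P")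
      case False
      have io: "E x Q + iota {P} Q = \<infinity>" using False cond_iv Q unfolding E_def iota_def by auto
      have "liminf c = \<infinity>" using LIc io by (simp add: top_unique[unfolded top_ereal_def])
      moreover have "limsup c = \<infinity>" using Liminf_le_Limsup[of sequentially c] calculation by simp
      ultimately show ?thesis using io by (intro Liminf_eq_Limsup) auto
    next
      case True
      obtain h where h: "\<forall>\<xi>. 0 \<le> h \<xi>" "integrable P h" "AE \<xi> in P. \<forall>n. gs n (x + \<xi>) \<le> ereal (h \<xi>)"
        using cond_v by blast
      have wcP: "weak_conv (\<lambda>_. P) P" unfolding weak_conv_def by simp
      have lo: "E x P \<le> liminf (\<lambda>n. expect P (\<lambda>\<xi>. gs n (x + \<xi>)))"
        unfolding E_def
        using liminf_main[of "\<lambda>_. P" P "\<lambda>_. x" x g gs, OF PPp(1)[OF P_in] PPp(2)[OF P_in] PPp(1)[OF P_in] PPp(2)[OF P_in]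
           wcP tendsto_const meas_g mgs cond_iii] cond_iv P_in spec[OF spec[OF spec[OF cond_ii, of x], of "\<lambda>_. P"], of P] deq[OF P_in P_in]
        by auto
      have up: "limsup (\<lambda>n. expect P (\<lambda>\<xi>. gs n (x + \<xi>))) \<le> E x P"
        unfolding E_def
      proof (rule limsup_main[OF PPp(1)[OF P_in] shift_meas[OF meas_g PPp(2)[OF P_in]] shift_meas[OF mgs PPp(2)[OF P_in]] h(2) _ h(3)])
        show "0 \<le> h \<xi>" for \<xi> using h(1) by blast
        show "(\<lambda>n. gs n (x + \<xi>)) \<longlonglongrightarrow> g (x + \<xi>)" for \<xi> using cond_v by blast
        show "- \<infinity> < expect P (\<lambda>\<xi>. g (x + \<xi>))" using cond_iv P_in by blast
      qed
      have alim: "(\<lambda>n. expect P (\<lambda>\<xi>. gs n (x + \<xi>))) \<longlonglongrightarrow> E x P"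
      proof (rule Liminf_eq_Limsup)
        show "liminf (\<lambda>n. expect P (\<lambda>\<xi>. gs n (x + \<xi>))) = E x P"
          using lo up Liminf_le_Limsup[of sequentially "\<lambda>n. expect P (\<lambda>\<xi>. gs n (x + \<xi>))"] by auto
        show "limsup (\<lambda>n. expect P (\<lambda>\<xi>. gs n (x + \<xi>))) = E x P"
          using lo up Liminf_le_Limsup[of sequentially "\<lambda>n. expect P (\<lambda>\<xi>. gs n (x + \<xi>))"] by auto
      qed simp
      have blim: "(\<lambda>n. ereal (\<theta> n * d P (Ps n))) \<longlonglongrightarrow> 0"
      proof -
        have "(\<lambda>n. \<theta> n * d P (Ps n)) \<longlonglongrightarrow> 0"
          using \<theta>_d dsym[OF P_in Ps_in[rule_format]] by simp
        then show ?thesis by (simp add: zero_ereal_def)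
      qed
      have "c \<longlonglongrightarrow> E x P + 0"
        unfolding c_def True by (rule tendsto_add_ereal_general[OF _ alim blim]) simp
      then show ?thesis using True by (simp add: iota_def)
    qed
    then show "\<exists>zs. (\<forall>n. zs n \<in> UNIV \<times> PP) \<and>
        ((\<lambda>n. fst (zs n)) \<longlonglongrightarrow> fst z \<and> (\<lambda>n. d (snd (zs n)) (snd z)) \<longlonglongrightarrow> 0) \<and>
        (\<lambda>n. case zs n of (x, Q) \<Rightarrow> expect Q (\<lambda>\<xi>. gs n (x + \<xi>)) + ereal (\<theta> n * d Q (Ps n)))
        \<longlonglongrightarrow> (case z of (x, Q) \<Rightarrow> expect Q (\<lambda>\<xi>. g (x + \<xi>)) + iota {P} Q)"
      by (intro exI[of _ "\<lambda>n. (x, Q)"]) (use Q z dQQ in \<open>auto simp: c_def[abs_def] E_def\<close>)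
  qed
qed

end
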